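(* Let $n\ge1$, identify the symmetric group $\mathfrak S_n$ with the group of permutations of $\mathbb Z/n$, let $\gamma$ be the permutation $i\mapsto i+1$, let $(\mathbb Z/n)^*$ be the subgroup of permutations $i\mapsto ki$ with $\gcd(k,n)=1$, and for $d\mid n$ let $(n/d)\mathbb Z/n$ be the cyclic subgroup of order $d$ generated by $\gamma^{n/d}$ (normalized by $(\mathbb Z/n)^*$). Let $S_n=\operatorname{Ind}_{\langle\gamma\rangle}^{\mathfrak S_n}\chi$, where $\chi$ is a faithful one-dimensional complex character of $\langle\gamma\rangle\cong\mathbb Z/n$. Then, in the representation ring (equivalently, as an identity of characters), \[S_n=\sum_{d\mid n}\mu(d)\,\operatorname{Ind}_{((n/d)\mathbb Z/n)\rtimes(\mathbb Z/n)^*}^{\mathfrak S_n}\mathbb 1,\] where $\mathbb 1$ is the trivial representation and $\mu$ is the Möbius function. *)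

theory Defs
  imports Complex_Main "HOL-Combinatorics.Combinatorics" "HOL-Computational_Algebra.Squarefree"
begin

text \<open>The symmetric group on Z/n, with Z/n realised as {0..<n}; permutations are
  functions nat => nat permuting {..<n} and fixing everything else.\<close>
definition Sym :: "nat \<Rightarrow> (nat \<Rightarrow> nat) set" where
  "Sym n = {p. p permutes {..<n}}"

definition gamma :: "nat \<Rightarrow> nat \<Rightarrow> nat" where
  "gamma n i = (if i < n then Suc i mod n else i)"

definition cyc :: "nat \<Rightarrow> (nat \<Rightarrow> nat) set" where
  "cyc n = {gamma n ^^ j | j. True}"

definition unitmul :: "nat \<Rightarrow> nat \<Rightarrow> nat \<Rightarrow> nat" where
  "unitmul n k i = (if i < n then (k * i) mod n else i)"

definition units_perm :: "nat \<Rightarrow> (nat \<Rightarrow> nat) set" where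
  "units_perm n = {unitmul n k | k. coprime k n}"

definition cyc_sub :: "nat \<Rightarrow> nat \<Rightarrow> (nat \<Rightarrow> nat) set" where
  "cyc_sub n d = {gamma n ^^ ((n div d) * j) | j. True}"

definition semidir :: "nat \<Rightarrow> nat \<Rightarrow> (nat \<Rightarrow> nat) set" where
  "semidir n d = {a \<circ> b | a b. a \<in> cyc_sub n d \<and> b \<in> units_perm n}"

definition ind :: "nat \<Rightarrow> (nat \<Rightarrow> nat) set \<Rightarrow> ((nat \<Rightarrow> nat) \<Rightarrow> complex) \<Rightarrow> (nat \<Rightarrow> nat) \<Rightarrow> complex" where
  "ind n H f g = (1 / of_nat (card H)) *
     (\<Sum>x\<in>Sym n. if inv x \<circ> g \<circ> x \<in> H then f (inv x \<circ> g \<circ> x) else 0)"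

definition moebius :: "nat \<Rightarrow> int" where
  "moebius d = (if squarefree d then (-1) ^ card (prime_factors d) else 0)"

end

theory Submission
  imports Defs "HOL-Number_Theory.Cong"
begin

definition aff :: "nat \<Rightarrow> nat \<Rightarrow> nat \<Rightarrow> nat \<Rightarrow> nat" where
  "aff n t v i = (if i < n then (v * i + t) mod n else i)"

lemma aff_cong:
  assumes "t mod n = t' mod n" "v mod n = v' mod n"
  shows "aff n t v = aff n t' v'"
proof
  fix i show "aff n t v i = aff n t' v' i"
    unfolding aff_def using assms
    by (metis mod_add_cong mod_mult_cong)
qed

lemma aff_comp: "aff n t v \<circ> aff n t' v' = aff n (v * t' + t) (v * v')"
proof
  fix i
  show "(aff n t v \<circ> aff n t' v') i = aff n (v * t' + t) (v * v') i"
  proof (cases "i < n")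
    case True
    then have "n > 0" by simp
    then have "(v' * i + t') mod n < n" by simp
    then have "(aff n t v \<circ> aff n t' v') i = (v * ((v' * i + t') mod n) + t) mod n"
      using True by (simp add: aff_def)
    also have "\<dots> = (v * (v' * i + t') + t) mod n"
      by (metis mod_add_left_eq mod_mult_right_eq)
    also have "\<dots> = ((v * v') * i + (v * t' + t)) mod n"
      by (simp add: algebra_simps)
    finally show ?thesis using True by (simp add: aff_def)
  qed (simp add: aff_def)
qed

lemma aff_id: "aff n 0 1 = id"
  by (auto simp: aff_def)

lemma aff_id': "aff n 0 (Suc 0) = id"
  by (auto simp: aff_def)

lemma aff_eq_iff:
  assumes n: "n \<ge> 1"
  shows "aff n t v = aff n t' v' \<longleftrightarrow> t mod n = t' mod n \<and> v mod n = v' mod n"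
proof
  assume h: "aff n t v = aff n t' v'"
  have t: "t mod n = t' mod n"
    using fun_cong[OF h, of 0] n by (simp add: aff_def)
  have "v mod n = v' mod n"
  proof (cases "n = 1")
    case True then show ?thesis by simp
  next
    case False
    then have "1 < n" using n by simp
    then have "(v + t) mod n = (v' + t') mod n"
      using fun_cong[OF h, of 1] by (simp add: aff_def)
    also have "\<dots> = (v' + t) mod n" using t by (metis mod_add_right_eq)
    finally have "[v + t = v' + t] (mod n)" by (simp add: cong_def)
    then show ?thesis by (metis cong_add_rcancel_nat cong_def)
  qed
  with t show "t mod n = t' mod n \<and> v mod n = v' mod n" by simp
next
  assume "t mod n = t' mod n \<and> v mod n = v' mod n"
  then show "aff n t v = aff n t' v'" by (intro aff_cong) auto
qed

lemma gamma_aff: "gamma n = aff n 1 1"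
  by (auto simp: gamma_def aff_def fun_eq_iff)

lemma gamma_pow: "gamma n ^^ j = aff n j 1"
proof (induction j)
  case 0 then show ?case by (auto simp: aff_def fun_eq_iff)
next
  case (Suc j) then show ?case by (simp add: gamma_aff aff_comp)
qed

lemma unitmul_aff: "unitmul n k = aff n 0 k"
  by (auto simp: unitmul_def aff_def fun_eq_iff)


definition U :: "nat \<Rightarrow> nat set" where "U n = {v. v < n \<and> coprime v n}"

lemma finite_U: "finite (U n)" by (auto simp: U_def)

definition minv :: "nat \<Rightarrow> nat \<Rightarrow> nat" where
  "minv n v = (SOME w. w < n \<and> [v * w = 1] (mod n))"

lemma minv:
  assumes "n \<ge> 1" "coprime v n"
  shows "minv n v < n" "[v * minv n v = 1] (mod n)"
proof -
  obtain x where x: "[v * x = 1] (mod n)" using cong_solve_coprime_nat[OF assms(2)] by auto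
  have "x mod n < n \<and> [v * (x mod n) = 1] (mod n)"
    using assms(1) x by (simp add: cong_def mod_mult_right_eq)
  then have "minv n v < n \<and> [v * minv n v = 1] (mod n)"
    unfolding minv_def by (rule someI)
  then show "minv n v < n" "[v * minv n v = 1] (mod n)" by auto
qed

lemma inv_coprime:
  fixes v w n :: nat
  assumes "[v * w = 1] (mod n)" shows "coprime w n"
proof -
  have "[w * v = Suc 0] (mod n)" using assms by (simp add: mult.commute)
  then show ?thesis unfolding coprime_iff_invertible_nat by blast
qed

lemma minv_U: assumes "n \<ge> 1" "v \<in> U n" shows "minv n v \<in> U n"
proof -
  have c: "coprime v n" using assms(2) by (simp add: U_def)
  show ?thesis unfolding U_def
    using minv(1)[OF assms(1) c] inv_coprime[OF minv(2)[OF assms(1) c]] by simp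
qed

lemma cyc_eq: assumes n: "n \<ge> 1" shows "cyc n = (\<lambda>t. aff n t 1) ` {..<n}"
proof (intro set_eqI iffI)
  fix x assume "x \<in> cyc n"
  then obtain j where "x = aff n j 1" unfolding cyc_def gamma_pow by blast
  also have "\<dots> = aff n (j mod n) 1" by (rule aff_cong) auto
  finally show "x \<in> (\<lambda>t. aff n t 1) ` {..<n}" using n by auto
next
  fix x assume "x \<in> (\<lambda>t. aff n t 1) ` {..<n}"
  then obtain t where "x = aff n t 1" by blast
  then show "x \<in> cyc n" unfolding cyc_def gamma_pow by blast
qed

lemma semidir_eq:
  assumes n: "n \<ge> 1" and d: "d dvd n"
  shows "semidir n d = (\<lambda>(t,k). aff n t k) ` ({t. t < n \<and> n div d dvd t} \<times> U n)"
proof -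
  let ?m = "n div d"
  have md: "?m dvd n" using d by (metis dvd_def dvd_div_mult_self mult.commute)
  show ?thesis
  proof (intro set_eqI iffI)
    fix x assume "x \<in> semidir n d"
    then obtain j k where x: "x = aff n (?m * j) 1 \<circ> aff n 0 k" and k: "coprime k n"
      unfolding semidir_def cyc_sub_def units_perm_def gamma_pow unitmul_aff by blast
    have "x = aff n (?m * j) k" using x by (simp add: aff_comp)
    also have "\<dots> = aff n ((?m * j) mod n) (k mod n)" by (rule aff_cong) auto
    finally have "x = aff n ((?m * j) mod n) (k mod n)" .
    moreover have "?m dvd (?m * j) mod n" using md by (simp add: dvd_mod)
    moreover have "k mod n \<in> U n" using k n by (auto simp: U_def)
    moreover have "(?m * j) mod n < n" using n by simp
    ultimately show "x \<in> (\<lambda>(t,k). aff n t k) ` ({t. t < n \<and> ?m dvd t} \<times> U n)" by force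
  next
    fix x assume "x \<in> (\<lambda>(t,k). aff n t k) ` ({t. t < n \<and> ?m dvd t} \<times> U n)"
    then obtain t k where x: "x = aff n t k" and t: "?m dvd t" and k: "k \<in> U n" by auto
    obtain j where j: "t = ?m * j" using t by blast
    have "x = aff n (?m * j) 1 \<circ> aff n 0 k" using x j by (simp add: aff_comp)
    then show "x \<in> semidir n d" using k
      unfolding semidir_def cyc_sub_def units_perm_def gamma_pow unitmul_aff U_def by blast
  qed
qed

lemma aff_inv_comp:
  assumes n: "n \<ge> 1" and w: "[v * w = 1] (mod n)"
  shows "aff n (w * (n - s mod n)) w \<circ> aff n s v = id"
    and "aff n s v \<circ> aff n (w * (n - s mod n)) w = id"
proof -
  have sn: "s mod n \<le> n" using n by (simp add: less_imp_le)
  have "aff n (w * (n - s mod n)) w \<circ> aff n s v = aff n (w * s + w * (n - s mod n)) (w * v)"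
    by (simp add: aff_comp)
  also have "\<dots> = aff n 0 1"
  proof (rule aff_cong)
    have "(w * s + w * (n - s mod n)) mod n = (w * (s mod n) + w * (n - s mod n)) mod n"
      by (metis mod_add_left_eq mod_mult_right_eq)
    also have "w * (s mod n) + w * (n - s mod n) = w * n"
      using sn by (metis add_mult_distrib2 le_add_diff_inverse)
    finally show "(w * s + w * (n - s mod n)) mod n = 0 mod n" by simp
    show "(w * v) mod n = 1 mod n" using w by (simp add: cong_def mult.commute)
  qed
  finally show "aff n (w * (n - s mod n)) w \<circ> aff n s v = id" by (simp add: aff_id aff_id')
  have "aff n s v \<circ> aff n (w * (n - s mod n)) w = aff n (v * (w * (n - s mod n)) + s) (v * w)"
    by (simp add: aff_comp)
  also have "\<dots> = aff n 0 1"
  proof (rule aff_cong)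
    have "(v * (w * (n - s mod n)) + s) mod n = ((v * w) * (n - s mod n) + s) mod n"
      by (simp add: mult.assoc)
    also have "\<dots> = (1 * (n - s mod n) + s) mod n"
      using w by (intro mod_add_cong mod_mult_cong) (simp_all add: cong_def)
    also have "\<dots> = ((n - s mod n) + s mod n) mod n"
      by (simp add: mod_add_right_eq)
    also have "\<dots> = 0" using sn by simp
    finally show "(v * (w * (n - s mod n)) + s) mod n = 0 mod n" by simp
    show "(v * w) mod n = 1 mod n" using w by (simp add: cong_def)
  qed
  finally show "aff n s v \<circ> aff n (w * (n - s mod n)) w = id" by (simp add: aff_id aff_id')
qed

lemma aff_bij:
  assumes n: "n \<ge> 1" and v: "coprime v n"
  shows "bij (aff n s v)" "aff n s v permutes {..<n}"
    "inv (aff n s v) = aff n (minv n v * (n - s mod n)) (minv n v)"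
proof -
  let ?g = "aff n (minv n v * (n - s mod n)) (minv n v)"
  note c = aff_inv_comp[OF n minv(2)[OF n v], of s]
  show "bij (aff n s v)" by (rule o_bij[OF c(1) c(2)])
  show "inv (aff n s v) = ?g" by (rule inv_unique_comp[OF c(2) c(1)])
  have bb: "bij_betw (aff n s v) {..<n} {..<n}"
  proof (rule bij_betwI[where g = ?g])
    show "aff n s v \<in> {..<n} \<rightarrow> {..<n}" by (auto simp: aff_def)
    show "?g \<in> {..<n} \<rightarrow> {..<n}" by (auto simp: aff_def)
    show "\<And>x. ?g (aff n s v x) = x" using c(1) by (rule pointfree_idE)
    show "\<And>x. aff n s v (?g x) = x" using c(2) by (rule pointfree_idE)
  qed
  have fx: "\<And>x. x \<notin> {..<n} \<Longrightarrow> aff n s v x = x" by (simp add: aff_def)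
  show "aff n s v permutes {..<n}" by (rule bij_imp_permutes[OF bb fx])
qed


lemma moebius_mult_prime:
  fixes p d :: nat
  assumes p: "prime p" and nd: "\<not> p dvd d" and d0: "d > 0"
  shows "moebius (p * d) = - moebius d"
proof -
  have cop: "coprime p d" using p nd by (simp add: prime_imp_coprime)
  have sq: "squarefree (p * d) \<longleftrightarrow> squarefree d"
  proof
    assume "squarefree (p * d)" then show "squarefree d" by (rule squarefree_mono[rotated]) simp
  next
    assume "squarefree d"
    then show "squarefree (p * d)" using squarefree_mult_coprime[OF cop squarefree_prime[OF p]] by simp
  qed
  have pf: "prime_factors (p * d) = insert p (prime_factors d)"
    using p d0 by (simp add: prime_factors_product prime_factorization_prime)
  have pn: "p \<notin> prime_factors d" using nd by auto
  have "card (prime_factors (p * d)) = Suc (card (prime_factors d))"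
    using pf pn by simp
  then show ?thesis unfolding moebius_def using sq by simp
qed

lemma moebius_sum:
  fixes g :: nat
  assumes g: "g \<ge> 1"
  shows "(\<Sum>d | d dvd g. moebius d) = (if g = 1 then 1 else 0)"
proof (cases "g = 1")
  case True
  then show ?thesis by (simp add: moebius_def)
next
  case False
  obtain p where p: "prime p" "p dvd g" using prime_factor_nat[OF False] by blast
  define D where "D = {d. d dvd g}"
  define D1 where "D1 = {d \<in> D. \<not> p dvd d}"
  define D2 where "D2 = {d \<in> D. p dvd d \<and> \<not> p^2 dvd d}"
  define D3 where "D3 = {d \<in> D. p^2 dvd d}"
  have g0: "g > 0" using g by simp
  have finD: "finite D" unfolding D_def using g0 by simp
  have D0: "d \<in> D \<Longrightarrow> d > 0" for d using g0 unfolding D_def by (auto intro: dvd_pos_nat)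
  have Dsplit: "D = D1 \<union> (D2 \<union> D3)"
    unfolding D1_def D2_def D3_def by auto
  have "(\<Sum>d\<in>D. moebius d) = (\<Sum>d\<in>D1. moebius d) + ((\<Sum>d\<in>D2. moebius d) + (\<Sum>d\<in>D3. moebius d))"
    unfolding Dsplit
    by (subst sum.union_disjoint; (subst sum.union_disjoint)?)
       (use finD in \<open>auto simp: D1_def D2_def D3_def intro: dvd_mult_left[of p p] \<close>)
  also have "(\<Sum>d\<in>D3. moebius d) = 0"
  proof (rule sum.neutral, rule ballI)
    fix d assume "d \<in> D3"
    then have "p^2 dvd d" unfolding D3_def by simp
    then have "\<not> squarefree d" using p by (intro not_squarefreeI) auto
    then show "moebius d = 0" by (simp add: moebius_def)
  qed
  also have "D2 = (\<lambda>d. p * d) ` D1"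
  proof (intro set_eqI iffI)
    fix x assume "x \<in> D2"
    then have x: "x dvd g" "p dvd x" "\<not> p^2 dvd x" unfolding D2_def D_def by auto
    then obtain e where e: "x = p * e" by blast
    have "\<not> p dvd e" using x(3) e by (auto simp: power2_eq_square)
    moreover have "e dvd g" using x(1) e by (metis dvd_mult_right)
    ultimately show "x \<in> (\<lambda>d. p * d) ` D1" using e unfolding D1_def D_def by blast
  next
    fix x assume "x \<in> (\<lambda>d. p * d) ` D1"
    then obtain e where e: "x = p * e" "e dvd g" "\<not> p dvd e" unfolding D1_def D_def by blast
    have "coprime p e" using p e(3) by (simp add: prime_imp_coprime)
    then have "p * e dvd g" using p(2) e(2) by (rule divides_mult[rotated 2])
    moreover have "\<not> p^2 dvd x" using e p by (auto simp: power2_eq_square)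
    ultimately show "x \<in> D2" using e unfolding D2_def D_def by auto
  qed
  also have "(\<Sum>d\<in>(\<lambda>d. p * d) ` D1. moebius d) = (\<Sum>d\<in>D1. moebius (p * d))"
    by (rule sum.reindex_cong[where l = "\<lambda>d. p * d"]) (use p in \<open>auto simp: inj_on_def\<close>)
  also have "\<dots> = (\<Sum>d\<in>D1. - moebius d)"
    by (rule sum.cong) (auto simp: D1_def intro!: moebius_mult_prime p D0)
  finally show ?thesis using False unfolding D_def by (simp add: sum_negf)
qed


lemma multiples_image:
  fixes d n :: nat
  assumes "d dvd n" "d > 0"
  shows "{j \<in> {..<n}. d dvd j} = (\<lambda>k. d * k) ` {..<n div d}"
proof (intro set_eqI iffI)
  fix j assume "j \<in> {j \<in> {..<n}. d dvd j}"
  then obtain k where k: "j = d * k" "d * k < n" by auto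
  have "d * (n div d) = n" using assms(1) by (rule dvd_mult_div_cancel)
  then have "d * k < d * (n div d)" using k by simp
  then have "k < n div d" by simp
  then show "j \<in> (\<lambda>k. d * k) ` {..<n div d}" using k by blast
next
  fix j assume "j \<in> (\<lambda>k. d * k) ` {..<n div d}"
  then obtain k where k: "j = d * k" "k < n div d" by auto
  have e: "d * (n div d) = n" using assms(1) by (rule dvd_mult_div_cancel)
  have "d * k < d * (n div d)" using k(2) assms(2) by (simp only: mult_less_cancel1)
  then have "d * k < n" using e by simp
  then show "j \<in> {j \<in> {..<n}. d dvd j}" using k assms by simp
qed

lemma mob_inner:
  fixes G :: "nat \<Rightarrow> complex" and d n :: nat
  assumes "d dvd n" "d > 0"
  shows "(\<Sum>k<n div d. G (d * k)) = (\<Sum>j<n. if d dvd j then G j else 0)"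
proof -
  have "(\<Sum>k<n div d. G (d * k)) = (\<Sum>j\<in>(\<lambda>k. d * k) ` {..<n div d}. G j)"
    using assms by (subst sum.reindex) (auto simp: inj_on_def)
  also have "\<dots> = (\<Sum>j\<in>{j \<in> {..<n}. d dvd j}. G j)" using multiples_image[OF assms] by simp
  also have "\<dots> = (\<Sum>j<n. if d dvd j then G j else 0)" by (rule sum.inter_filter) simp
  finally show ?thesis .
qed

lemma mob_main:
  fixes G :: "nat \<Rightarrow> complex"
  assumes n: "n \<ge> 1"
  shows "(\<Sum>d | d dvd n. of_int (moebius d) * (\<Sum>k<n div d. G (d * k))) = (\<Sum>j\<in>U n. G j)"
proof -
  have fin: "finite {d. d dvd n}" using n by simp
  have pos: "d dvd n \<Longrightarrow> d > 0" for d using n by (auto intro: dvd_pos_nat)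
  have "(\<Sum>d | d dvd n. of_int (moebius d) * (\<Sum>k<n div d. G (d * k)))
      = (\<Sum>d | d dvd n. \<Sum>j<n. of_int (moebius d) * (if d dvd j then G j else 0))"
    by (rule sum.cong) (simp_all add: mob_inner pos sum_distrib_left)
  also have "\<dots> = (\<Sum>j<n. \<Sum>d | d dvd n. of_int (moebius d) * (if d dvd j then G j else 0))"
    by (rule sum.swap)
  also have "\<dots> = (\<Sum>j<n. G j * of_int (\<Sum>d | d dvd gcd j n. moebius d))"
  proof (rule sum.cong[OF refl])
    fix j assume "j \<in> {..<n}"
    have "(\<Sum>d | d dvd n. of_int (moebius d) * (if d dvd j then G j else 0))
        = (\<Sum>d | d dvd n. G j * (if d dvd j then of_int (moebius d) else 0))"
      by (rule sum.cong) auto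
    also have "\<dots> = G j * (\<Sum>d | d dvd n. (if d dvd j then of_int (moebius d) else 0))"
      by (simp add: sum_distrib_left)
    also have "(\<Sum>d | d dvd n. (if d dvd j then of_int (moebius d) else 0))
        = (\<Sum>d \<in> {d \<in> {d. d dvd n}. d dvd j}. (of_int (moebius d) :: complex))"
      by (rule sum.inter_filter[symmetric]) (rule fin)
    also have "{d \<in> {d. d dvd n}. d dvd j} = {d. d dvd gcd j n}" by auto
    finally show "(\<Sum>d | d dvd n. of_int (moebius d) * (if d dvd j then G j else 0))
        = G j * of_int (\<Sum>d | d dvd gcd j n. moebius d)" by simp
  qed
  also have "\<dots> = (\<Sum>j<n. if coprime j n then G j else 0)"
  proof (rule sum.cong[OF refl])
    fix j assume "j \<in> {..<n}"
    have "gcd j n \<ge> 1" using n by (simp add: Suc_le_eq)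
    then show "G j * of_int (\<Sum>d | d dvd gcd j n. moebius d) = (if coprime j n then G j else 0)"
      unfolding moebius_sum[OF \<open>gcd j n \<ge> 1\<close>] by (simp add: coprime_iff_gcd_eq_1)
  qed
  also have "\<dots> = (\<Sum>j\<in>{j \<in> {..<n}. coprime j n}. G j)"
    by (rule sum.inter_filter[symmetric]) simp
  also have "{j \<in> {..<n}. coprime j n} = U n" by (auto simp: U_def)
  finally show ?thesis .
qed


lemma u_cond:
  fixes u n :: nat
  assumes n: "n \<ge> 1"
  shows "n dvd (u + n - 1) \<longleftrightarrow> u mod n = 1 mod n"
proof -
  have "n dvd (u + n - 1) \<longleftrightarrow> [u + (n - 1) = 0] (mod n)"
    using n by (simp add: cong_0_iff)
  also have "\<dots> \<longleftrightarrow> [u + (n - 1) + 1 = 0 + 1] (mod n)"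
    using cong_add_rcancel_nat by (metis cong_add_rcancel_nat)
  also have "u + (n - 1) + 1 = u + n" using n by simp
  also have "[u + n = 0 + 1] (mod n) \<longleftrightarrow> [u = 1] (mod n)"
    by (simp add: cong_def)
  finally show ?thesis by (simp add: cong_def)
qed

lemma pow_split: "(z::complex) ^ (j * (c * s + t)) = z ^ (j * t) * (z ^ (j * c)) ^ s"
proof -
  have "j * (c * s + t) = j * t + (j * c) * s" by (simp add: algebra_simps)
  then show ?thesis by (simp add: power_add power_mult)
qed

locale prim =
  fixes n :: nat and z :: complex
  assumes n: "n \<ge> 1"
    and zeq: "\<And>a b. z ^ a = z ^ b \<longleftrightarrow> a mod n = b mod n"
begin

lemma z_n: "z ^ (n * X) = 1"
proof -
  have "z ^ (n * X) = z ^ 0" using zeq[of "n * X" 0] by simp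
  then show ?thesis by simp
qed

lemma geo:
  fixes q :: complex and m :: nat
  assumes "q ^ m = 1"
  shows "(\<Sum>k<m. q ^ k) = (if q = 1 then of_nat m else 0)"
  using assms by (simp add: sum_gp_strict)

lemma root_ind:
  assumes d: "d dvd n" and d0: "d > 0"
  shows "(if n div d dvd X then 1 else 0) =
         (1 / of_nat (n div d)) * (\<Sum>k<n div d. z ^ ((d * k) * X))"
proof -
  let ?m = "n div d"
  have dm: "d * ?m = n" using d by (rule dvd_mult_div_cancel)
  have m0: "?m > 0" using dm n by (metis gr0I mult_0_right not_one_le_zero)
  let ?q = "z ^ (d * X)"
  have qk: "z ^ ((d * k) * X) = ?q ^ k" for k
    by (metis mult.commute mult.left_commute power_mult)
  have qm: "?q ^ ?m = 1"
  proof -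
    have "?q ^ ?m = z ^ (n * X)" using dm
      by (metis mult.commute mult.left_commute power_mult)
    then show ?thesis using z_n by simp
  qed
  have q1: "?q = 1 \<longleftrightarrow> ?m dvd X"
  proof -
    have "?q = 1 \<longleftrightarrow> z ^ (d * X) = z ^ 0" by simp
    also have "\<dots> \<longleftrightarrow> n dvd d * X" using zeq[of "d * X" 0] by (simp add: dvd_eq_mod_eq_0)
    also have "\<dots> \<longleftrightarrow> d * ?m dvd d * X" using dm by simp
    also have "\<dots> \<longleftrightarrow> ?m dvd X" using d0 by simp
    finally show ?thesis .
  qed
  have "(\<Sum>k<?m. z ^ ((d * k) * X)) = (\<Sum>k<?m. ?q ^ k)" using qk by simp
  also have "\<dots> = (if ?m dvd X then of_nat ?m else 0)" using geo[OF qm] q1 by simp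
  finally show ?thesis using m0 by simp
qed

lemma NT:
  fixes u t :: nat
  shows "(\<Sum>d | d dvd n. of_int (moebius d) * (1 / of_nat d) *
            (\<Sum>s<n. if n div d dvd ((u + n - 1) * s + t) then 1 else 0))
       = (if u mod n = 1 mod n then (\<Sum>j\<in>U n. z ^ (j * t)) else 0)"
proof -
  define G where "G j = (1 / of_nat n) * (\<Sum>s<n. z ^ (j * ((u + n - 1) * s + t)))" for j
  have step: "(1 / of_nat d) * (\<Sum>s<n. if n div d dvd ((u + n - 1) * s + t) then 1 else 0)
      = (\<Sum>k<n div d. G (d * k))" if d: "d dvd n" for d
  proof -
    have d0: "d > 0" using d n by (auto intro: dvd_pos_nat)
    have dm: "d * (n div d) = n" using d by (rule dvd_mult_div_cancel)
    have "(1 / of_nat d) * (\<Sum>s<n. if n div d dvd ((u + n - 1) * s + t) then 1 else 0)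
        = (1 / of_nat d) * (\<Sum>s<n. (1 / of_nat (n div d)) *
              (\<Sum>k<n div d. z ^ ((d * k) * ((u + n - 1) * s + t))))"
      by (simp add: root_ind[OF d d0])
    also have "\<dots> = (1 / (of_nat d * of_nat (n div d))) *
              (\<Sum>s<n. \<Sum>k<n div d. z ^ ((d * k) * ((u + n - 1) * s + t)))"
      by (simp add: sum_distrib_left)
    also have "of_nat d * of_nat (n div d) = (of_nat n :: complex)"
      using dm by (metis of_nat_mult)
    also have "(\<Sum>s<n. \<Sum>k<n div d. z ^ ((d * k) * ((u + n - 1) * s + t)))
        = (\<Sum>k<n div d. \<Sum>s<n. z ^ ((d * k) * ((u + n - 1) * s + t)))"
      by (rule sum.swap)
    finally show ?thesis by (simp add: G_def sum_distrib_left)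
  qed
  have "(\<Sum>d | d dvd n. of_int (moebius d) * (1 / of_nat d) *
            (\<Sum>s<n. if n div d dvd ((u + n - 1) * s + t) then 1 else 0))
      = (\<Sum>d | d dvd n. of_int (moebius d) * (\<Sum>k<n div d. G (d * k)))"
  proof (rule sum.cong[OF refl])
    fix d assume "d \<in> {d. d dvd n}"
    then have "d dvd n" by simp
    from step[OF this] show "of_int (moebius d) * (1 / of_nat d) *
            (\<Sum>s<n. if n div d dvd ((u + n - 1) * s + t) then 1 else 0)
      = of_int (moebius d) * (\<Sum>k<n div d. G (d * k))"
      by (metis mult.assoc)
  qed
  also have "\<dots> = (\<Sum>j\<in>U n. G j)" by (rule mob_main[OF n])
  also have "\<dots> = (\<Sum>j\<in>U n. if u mod n = 1 mod n then z ^ (j * t) else 0)"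
  proof (rule sum.cong[OF refl])
    fix j assume j: "j \<in> U n"
    let ?q = "z ^ (j * (u + n - 1))"
    have e: "z ^ (j * ((u + n - 1) * s + t)) = z ^ (j * t) * ?q ^ s" for s
      using pow_split[of z j "u + n - 1" s t] .
    have qn: "?q ^ n = 1" using z_n[of "j * (u + n - 1)"]
      by (metis mult.commute power_mult)
    have q1: "?q = 1 \<longleftrightarrow> u mod n = 1 mod n"
    proof -
      have "?q = 1 \<longleftrightarrow> z ^ (j * (u + n - 1)) = z ^ 0" by simp
      also have "\<dots> \<longleftrightarrow> n dvd j * (u + n - 1)" using zeq[of "j * (u + n - 1)" 0] by (simp add: dvd_eq_mod_eq_0)
      also have "\<dots> \<longleftrightarrow> n dvd (u + n - 1)"
        using j by (simp add: U_def coprime_dvd_mult_right_iff coprime_commute)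
      also have "\<dots> \<longleftrightarrow> u mod n = 1 mod n" by (rule u_cond[OF n])
      finally show ?thesis .
    qed
    have "G j = (1 / of_nat n) * (z ^ (j * t) * (\<Sum>s<n. ?q ^ s))"
      unfolding G_def e by (simp add: sum_distrib_left)
    also have "\<dots> = (if u mod n = 1 mod n then z ^ (j * t) else 0)"
      using geo[OF qn] q1 n by simp
    finally show "G j = (if u mod n = 1 mod n then z ^ (j * t) else 0)" .
  qed
  also have "\<dots> = (if u mod n = 1 mod n then (\<Sum>j\<in>U n. z ^ (j * t)) else 0)"
    by simp
  finally show ?thesis .
qed

end


lemma K_iff:
  assumes n: "n \<ge> 1" and d: "d dvd n"
  shows "b \<in> semidir n d \<longleftrightarrow> (\<exists>t k. coprime k n \<and> n div d dvd t \<and> b = aff n t k)"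
proof -
  have md: "n div d dvd n" using d by (metis dvd_def dvd_div_mult_self mult.commute)
  show ?thesis
  proof
    assume "b \<in> semidir n d"
    then show "\<exists>t k. coprime k n \<and> n div d dvd t \<and> b = aff n t k"
      unfolding semidir_eq[OF n d] U_def by auto
  next
    assume "\<exists>t k. coprime k n \<and> n div d dvd t \<and> b = aff n t k"
    then obtain t k where tk: "coprime k n" "n div d dvd t" "b = aff n t k" by blast
    have "b = aff n (t mod n) (k mod n)" unfolding tk(3) by (rule aff_cong) simp_all
    moreover have "t mod n < n" "k mod n < n" using n by auto
    moreover have "coprime (k mod n) n" using tk(1) n by auto
    moreover have "n div d dvd t mod n" using tk(2) md by (simp add: dvd_mod)
    ultimately show "b \<in> semidir n d"
      unfolding semidir_eq[OF n d] U_def by auto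
  qed
qed

lemma A_iff:
  assumes n: "n \<ge> 1"
  shows "b \<in> semidir n n \<longleftrightarrow> (\<exists>t k. coprime k n \<and> b = aff n t k)"
  using K_iff[OF n dvd_refl] n by simp

lemma C_iff:
  assumes n: "n \<ge> 1"
  shows "b \<in> cyc n \<longleftrightarrow> (\<exists>t. b = aff n t 1)"
proof
  assume "b \<in> cyc n" then show "\<exists>t. b = aff n t 1" unfolding cyc_eq[OF n] by auto
next
  assume "\<exists>t. b = aff n t 1"
  then show "b \<in> cyc n" unfolding cyc_def gamma_pow by blast
qed

lemma A_comp:
  assumes n: "n \<ge> 1" and "a \<in> semidir n n" "b \<in> semidir n n"
  shows "a \<circ> b \<in> semidir n n"
proof -
  obtain t k t' k' where h: "coprime k n" "a = aff n t k" "coprime k' n" "b = aff n t' k'"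
    using assms A_iff[OF n] by meson
  have "a \<circ> b = aff n (k * t' + t) (k * k')" using h by (simp add: aff_comp)
  moreover have "coprime (k * k') n" using h by simp
  ultimately show ?thesis unfolding A_iff[OF n] by blast
qed

lemma A_inv:
  assumes n: "n \<ge> 1" and "a \<in> semidir n n"
  shows "inv a \<in> semidir n n" "a permutes {..<n}"
proof -
  obtain t k where tk: "coprime k n" "a = aff n t k"
    using assms A_iff[OF n] by meson
  show "inv a \<in> semidir n n"
    unfolding A_iff[OF n] tk(2) aff_bij(3)[OF n tk(1)]
    using inv_coprime[OF minv(2)[OF n tk(1)]] by blast
  show "a permutes {..<n}" using tk aff_bij(2)[OF n] by simp
qed

lemma conj_formula:
  assumes n: "n \<ge> 1" and v: "coprime v n"
  shows "inv (aff n s v) \<circ> aff n t u \<circ> aff n s v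
       = aff n (minv n v * ((u + n - 1) * s + t)) u"
proof -
  let ?w = "minv n v" and ?X = "(u + n - 1) * s + t"
  have vw: "[v * ?w = 1] (mod n)" by (rule minv(2)[OF n v])
  have "aff n s v \<circ> aff n (?w * ?X) u = aff n (v * (?w * ?X) + s) (v * u)"
    by (simp add: aff_comp)
  also have "\<dots> = aff n (u * s + t) (u * v)"
  proof (rule aff_cong)
    have "(v * (?w * ?X) + s) mod n = ((v * ?w) * ?X + s) mod n" by (simp add: mult.assoc)
    also have "\<dots> = (1 * ?X + s) mod n"
      using vw by (intro mod_add_cong mod_mult_cong) (simp_all add: cong_def)
    also have "1 * ?X + s = u * s + t + n * s"
    proof -
      have "u + n - 1 + 1 = u + n" using n by simp
      then have "(u + n - 1) * s + s = (u + n) * s" by (metis add_mult_distrib mult_1)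
      then show ?thesis by (simp add: algebra_simps)
    qed
    also have "(u * s + t + n * s) mod n = (u * s + t) mod n" by simp
    finally show "(v * (?w * ?X) + s) mod n = (u * s + t) mod n" .
    show "(v * u) mod n = (u * v) mod n" by (simp add: mult.commute)
  qed
  also have "\<dots> = aff n t u \<circ> aff n s v" by (simp add: aff_comp)
  finally have e: "aff n s v \<circ> aff n (?w * ?X) u = aff n t u \<circ> aff n s v" .
  have b: "bij (aff n s v)" by (rule aff_bij(1)[OF n v])
  have "inv (aff n s v) \<circ> aff n t u \<circ> aff n s v = inv (aff n s v) \<circ> (aff n s v \<circ> aff n (?w * ?X) u)"
    using e by (simp add: comp_assoc)
  also have "\<dots> = aff n (?w * ?X) u"
    using b by (simp add: comp_assoc[symmetric] bij_is_inj)
  finally show ?thesis .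
qed


lemma aff_inj:
  assumes n: "n \<ge> 1"
  shows "inj_on (\<lambda>(t,k). aff n t k) ({..<n} \<times> U n)"
  using n by (auto simp: inj_on_def aff_eq_iff U_def)

lemma card_cyc: assumes n: "n \<ge> 1" shows "card (cyc n) = n"
proof -
  have "inj_on (\<lambda>t. aff n t 1) {..<n}" using n by (auto simp: inj_on_def aff_eq_iff)
  then show ?thesis unfolding cyc_eq[OF n] by (simp add: card_image)
qed

lemma card_K:
  assumes n: "n \<ge> 1" and d: "d dvd n"
  shows "card (semidir n d) = d * card (U n)"
proof -
  let ?m = "n div d"
  have d0: "d > 0" using d n by (auto intro: dvd_pos_nat)
  have dm: "d * ?m = n" using d by (rule dvd_mult_div_cancel)
  have m0: "?m > 0" using dm n by (metis gr0I mult_0_right not_one_le_zero)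
  have md: "?m dvd n" using dm by (metis dvd_triv_right)
  have nm: "n div ?m = d" using dm m0 by (metis nonzero_mult_div_cancel_right not_gr0)
  have "{t. t < n \<and> ?m dvd t} = {j \<in> {..<n}. ?m dvd j}" by auto
  also have "\<dots> = (\<lambda>k. ?m * k) ` {..<n div ?m}" by (rule multiples_image[OF md m0])
  finally have ce: "card {t. t < n \<and> ?m dvd t} = d"
    using m0 nm by (simp add: card_image inj_on_def)
  have sub: "{t. t < n \<and> ?m dvd t} \<times> U n \<subseteq> {..<n} \<times> U n" by auto
  have "card (semidir n d) = card ({t. t < n \<and> ?m dvd t} \<times> U n)"
    unfolding semidir_eq[OF n d] by (rule card_image[OF inj_on_subset[OF aff_inj[OF n] sub]])
  also have "\<dots> = d * card (U n)" using ce by (simp add: card_cartesian_product)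
  finally show ?thesis .
qed

lemma card_U_pos: assumes n: "n \<ge> 1" shows "card (U n) > 0"
proof -
  have "1 mod n \<in> U n" using n unfolding U_def
    by (cases "n = 1") auto
  then show ?thesis using finite_U by (auto simp: card_gt_0_iff)
qed

lemma minv_reindex:
  fixes f :: "nat \<Rightarrow> complex"
  assumes n: "n \<ge> 1"
  shows "(\<Sum>v\<in>U n. f (minv n v)) = (\<Sum>j\<in>U n. f j)"
proof -
  have inj: "inj_on (minv n) (U n)"
  proof (rule inj_onI)
    fix v v' assume v: "v \<in> U n" and v': "v' \<in> U n" and e: "minv n v = minv n v'"
    have cv: "coprime v n" "coprime v' n" using v v' by (auto simp: U_def)
    have "[v * minv n v = 1] (mod n)" "[v' * minv n v = 1] (mod n)"
      using minv(2)[OF n cv(1)] minv(2)[OF n cv(2)] e by auto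
    then have cc: "[v * minv n v = v' * minv n v] (mod n)" by (metis cong_sym cong_trans)
    have cm: "coprime (minv n v) n" using inv_coprime[OF minv(2)[OF n cv(1)]] .
    have "[v = v'] (mod n)" using cong_mult_rcancel_nat[OF cm] cc by simp
    then show "v = v'" using v v' by (simp add: cong_def U_def)
  qed
  have "minv n ` U n = U n"
    by (rule endo_inj_surj[OF finite_U _ inj]) (use minv_U[OF n] in blast)
  then show ?thesis using sum.reindex[OF inj, of f] by simp
qed

lemma memC:
  assumes n: "n \<ge> 1"
  shows "aff n T u \<in> cyc n \<longleftrightarrow> u mod n = 1 mod n"
  unfolding C_iff[OF n] aff_eq_iff[OF n] by auto

lemma memK:
  assumes n: "n \<ge> 1" and u: "coprime u n" and v: "coprime v n" and d: "d dvd n"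
  shows "aff n (minv n v * X) u \<in> semidir n d \<longleftrightarrow> n div d dvd X"
proof
  assume "n div d dvd X"
  then have "n div d dvd minv n v * X" by simp
  then show "aff n (minv n v * X) u \<in> semidir n d" unfolding K_iff[OF n d] using u by blast
next
  let ?m = "n div d"
  have md: "?m dvd n" using d by (metis dvd_def dvd_div_mult_self mult.commute)
  assume "aff n (minv n v * X) u \<in> semidir n d"
  then obtain T k where Tk: "coprime k n" "?m dvd T" "aff n (minv n v * X) u = aff n T k"
    unfolding K_iff[OF n d] by blast
  then have "(minv n v * X) mod n = T mod n" using aff_eq_iff[OF n] by simp
  moreover have "?m dvd T mod n" using Tk(2) md by (simp add: dvd_mod)
  ultimately have "?m dvd (minv n v * X) mod n" by simp
  then have h1: "?m dvd minv n v * X" using md by (simp add: dvd_mod_iff)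
  have "[v * minv n v * X = 1 * X] (mod n)"
    using minv(2)[OF n v] by (rule cong_scalar_right)
  then have "[v * minv n v * X = X] (mod ?m)" using md by (simp add: cong_dvd_modulus_nat)
  moreover have "?m dvd v * minv n v * X" using h1 by (simp add: mult.assoc)
  ultimately show "?m dvd X" by (metis cong_dvd_iff)
qed

definition Psi :: "nat \<Rightarrow> ((nat \<Rightarrow> nat) \<Rightarrow> complex) \<Rightarrow> (nat \<Rightarrow> nat) \<Rightarrow> complex" where
  "Psi n chi b = (1 / of_nat (card (cyc n))) * (if b \<in> cyc n then chi b else 0)
     - (\<Sum>d | d dvd n. of_int (moebius d) *
          ((1 / of_nat (card (semidir n d))) * (if b \<in> semidir n d then 1 else 0)))"

context
  fixes n :: nat and chi :: "(nat \<Rightarrow> nat) \<Rightarrow> complex"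
  assumes n: "n \<ge> 1"
    and hom: "\<forall>a\<in>cyc n. \<forall>b\<in>cyc n. chi (a \<circ> b) = chi a * chi b"
    and nonzero: "\<forall>a\<in>cyc n. chi a \<noteq> 0"
    and faithful: "inj_on chi (cyc n)"
begin

lemma chi_id: "chi (aff n 0 1) = 1"
proof -
  have c: "aff n 0 1 \<in> cyc n" using C_iff[OF n] by blast
  have "chi (aff n 0 1) = chi (aff n 0 1) * chi (aff n 0 1)"
    using hom c by (metis aff_id comp_id)
  then show ?thesis using nonzero c by simp
qed

lemma chi_aff: "chi (aff n t 1) = chi (gamma n) ^ t"
proof (induction t)
  case 0 then show ?case using chi_id by simp
next
  case (Suc t)
  have e: "aff n (Suc t) 1 = gamma n \<circ> aff n t 1" by (simp add: gamma_aff aff_comp)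
  have g: "gamma n \<in> cyc n" "aff n t 1 \<in> cyc n" using C_iff[OF n] gamma_aff by auto
  have h: "chi (gamma n \<circ> aff n t 1) = chi (gamma n) * chi (aff n t 1)"
    using hom g by blast
  show ?case by (simp only: e h Suc.IH power_Suc)
qed

lemma zeq: "chi (gamma n) ^ a = chi (gamma n) ^ b \<longleftrightarrow> a mod n = b mod n"
proof
  assume "a mod n = b mod n"
  then have "aff n a 1 = aff n b 1" by (intro aff_cong) auto
  then show "chi (gamma n) ^ a = chi (gamma n) ^ b" using chi_aff by metis
next
  assume "chi (gamma n) ^ a = chi (gamma n) ^ b"
  then have "chi (aff n a 1) = chi (aff n b 1)" using chi_aff by simp
  moreover have "aff n a 1 \<in> cyc n" "aff n b 1 \<in> cyc n" using C_iff[OF n] by auto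
  ultimately have "aff n a 1 = aff n b 1" using faithful by (auto dest: inj_onD)
  then show "a mod n = b mod n" using aff_eq_iff[OF n] by simp
qed

interpretation P: prim n "chi (gamma n)"
  using n zeq by unfold_locales auto


lemma core:
  assumes u: "coprime u n"
  shows "(\<Sum>y\<in>semidir n n. Psi n chi (inv y \<circ> aff n t u \<circ> y)) = 0"
proof -
  let ?z = "chi (gamma n)"
  let ?X = "\<lambda>s. (u + n - 1) * s + t"
  let ?c = "\<lambda>v. if u mod n = 1 mod n then ?z ^ (minv n v * t) else 0"
  let ?io = "\<lambda>d s. if n div d dvd ?X s then 1 else 0 :: complex"
  have Aeq: "semidir n n = (\<lambda>(s,v). aff n s v) ` ({..<n} \<times> U n)"
    using semidir_eq[OF n dvd_refl] n by (simp add: lessThan_def)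
  have tm: "Psi n chi (inv (aff n s v) \<circ> aff n t u \<circ> aff n s v)
      = (1 / of_nat n) * ?c v
        - (\<Sum>d | d dvd n. of_int (moebius d) * ((1 / of_nat (d * card (U n))) * ?io d s))"
    if sv: "s \<in> {..<n}" "v \<in> U n" for s v
  proof -
    have cv: "coprime v n" using sv by (simp add: U_def)
    have cf: "inv (aff n s v) \<circ> aff n t u \<circ> aff n s v = aff n (minv n v * ?X s) u"
      by (rule conj_formula[OF n cv])
    have p1: "(if aff n (minv n v * ?X s) u \<in> cyc n then chi (aff n (minv n v * ?X s) u) else 0) = ?c v"
    proof (cases "u mod n = 1 mod n")
      case True
      have "n dvd (u + n - 1)" using True u_cond[OF n] by simp
      then obtain c where c: "u + n - 1 = n * c" by blast
      have "aff n (minv n v * ?X s) u = aff n (minv n v * ?X s) 1" using True by (intro aff_cong) auto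
      then have "chi (aff n (minv n v * ?X s) u) = ?z ^ (minv n v * ?X s)" using chi_aff by metis
      also have "\<dots> = ?z ^ (minv n v * t)"
      proof -
        have "minv n v * ?X s = minv n v * t + n * (minv n v * c * s)" unfolding c
          by (simp add: algebra_simps)
        then have "(minv n v * ?X s) mod n = (minv n v * t) mod n" by simp
        then show ?thesis using zeq by blast
      qed
      finally show ?thesis using True memC[OF n] by simp
    next
      case False then show ?thesis using memC[OF n] by simp
    qed
    have p2: "(if aff n (minv n v * ?X s) u \<in> semidir n d then 1 else 0) = ?io d s" if "d dvd n" for d
      using memK[OF n u cv that] by simp
    have sd: "(\<Sum>d | d dvd n. of_int (moebius d) * ((1 / of_nat (card (semidir n d))) *
               (if aff n (minv n v * ?X s) u \<in> semidir n d then 1 else 0)))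
        = (\<Sum>d | d dvd n. of_int (moebius d) * ((1 / of_nat (d * card (U n))) * ?io d s))"
    proof (rule sum.cong[OF refl])
      fix d assume "d \<in> {d. d dvd n}"
      then have d: "d dvd n" by simp
      show "of_int (moebius d) * ((1 / of_nat (card (semidir n d))) *
               (if aff n (minv n v * ?X s) u \<in> semidir n d then 1 else 0))
          = of_int (moebius d) * ((1 / of_nat (d * card (U n))) * ?io d s)"
        unfolding p2[OF d] card_K[OF n d] ..
    qed
    show ?thesis unfolding cf Psi_def card_cyc[OF n] p1 sd ..
  qed
  have "(\<Sum>y\<in>semidir n n. Psi n chi (inv y \<circ> aff n t u \<circ> y))
      = (\<Sum>(s,v)\<in>{..<n} \<times> U n. Psi n chi (inv (aff n s v) \<circ> aff n t u \<circ> aff n s v))"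
    unfolding Aeq by (subst sum.reindex[OF aff_inj[OF n]]) (simp add: case_prod_beta)
  also have "\<dots> = (\<Sum>s<n. \<Sum>v\<in>U n. Psi n chi (inv (aff n s v) \<circ> aff n t u \<circ> aff n s v))"
    by (rule sum.cartesian_product[symmetric])
  also have "\<dots> = (\<Sum>s<n. \<Sum>v\<in>U n. (1 / of_nat n) * ?c v
        - (\<Sum>d | d dvd n. of_int (moebius d) * ((1 / of_nat (d * card (U n))) * ?io d s)))"
    by (intro sum.cong refl tm) auto
  also have "\<dots> = (\<Sum>s<n. \<Sum>v\<in>U n. (1 / of_nat n) * ?c v)
        - (\<Sum>s<n. \<Sum>v\<in>U n. \<Sum>d | d dvd n. of_int (moebius d) * ((1 / of_nat (d * card (U n))) * ?io d s))"
    by (simp add: sum_subtractf)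
  also have "(\<Sum>s<n. \<Sum>v\<in>U n. (1 / of_nat n) * ?c v) = (\<Sum>v\<in>U n. ?c v)"
    using n by (simp add: sum_divide_distrib[symmetric])
  also have "\<dots> = (if u mod n = 1 mod n then (\<Sum>j\<in>U n. ?z ^ (j * t)) else 0)"
    using minv_reindex[OF n, of "\<lambda>j. ?z ^ (j * t)"] by simp
  also have "(\<Sum>s<n. \<Sum>v\<in>U n. \<Sum>d | d dvd n. of_int (moebius d) * ((1 / of_nat (d * card (U n))) * ?io d s))
      = (\<Sum>d | d dvd n. of_int (moebius d) * (1 / of_nat d) * (\<Sum>s<n. ?io d s))"
  proof -
    have cu: "card (U n) > 0" by (rule card_U_pos[OF n])
    have "(\<Sum>s<n. \<Sum>v\<in>U n. \<Sum>d | d dvd n. of_int (moebius d) * ((1 / of_nat (d * card (U n))) * ?io d s))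
        = (\<Sum>s<n. of_nat (card (U n)) * (\<Sum>d | d dvd n. of_int (moebius d) * ((1 / of_nat (d * card (U n))) * ?io d s)))"
      by simp
    also have "\<dots> = (\<Sum>s<n. \<Sum>d | d dvd n. of_int (moebius d) * (1 / of_nat d) * ?io d s)"
      using cu by (simp add: sum_distrib_left field_simps)
    also have "\<dots> = (\<Sum>d | d dvd n. \<Sum>s<n. of_int (moebius d) * (1 / of_nat d) * ?io d s)"
      by (rule sum.swap)
    also have "\<dots> = (\<Sum>d | d dvd n. of_int (moebius d) * (1 / of_nat d) * (\<Sum>s<n. ?io d s))"
      by (simp add: sum_distrib_left)
    finally show ?thesis .
  qed
  also have "\<dots> = (if u mod n = 1 mod n then (\<Sum>j\<in>U n. ?z ^ (j * t)) else 0)"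
    by (rule P.NT)
  finally show ?thesis unfolding comp_def by simp
qed


lemma C_sub_A: "cyc n \<subseteq> semidir n n"
proof
  fix b assume "b \<in> cyc n"
  then obtain t where "b = aff n t 1" using C_iff[OF n] by blast
  moreover have "coprime (1::nat) n" by simp
  ultimately show "b \<in> semidir n n" using A_iff[OF n] by blast
qed

lemma K_sub_A: "d dvd n \<Longrightarrow> semidir n d \<subseteq> semidir n n"
  using K_iff[OF n] A_iff[OF n] by blast

lemma Psi_zero: assumes "b \<notin> semidir n n" shows "Psi n chi b = 0"
proof -
  have "b \<notin> cyc n" using assms C_sub_A by blast
  moreover have "\<And>d. d dvd n \<Longrightarrow> b \<notin> semidir n d" using assms K_sub_A by blast
  ultimately show ?thesis unfolding Psi_def by simp
qed

lemma inner_zero: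
  assumes h: "h \<in> Sym n"
  shows "(\<Sum>y\<in>semidir n n. Psi n chi (inv y \<circ> h \<circ> y)) = 0"
proof (cases "h \<in> semidir n n")
  case True
  then obtain t u where "coprime u n" "h = aff n t u" using A_iff[OF n] by blast
  then show ?thesis using core by simp
next
  case False
  have "Psi n chi (inv y \<circ> h \<circ> y) = 0" if y: "y \<in> semidir n n" for y
  proof (rule Psi_zero, rule notI)
    assume c: "inv y \<circ> h \<circ> y \<in> semidir n n"
    have yp: "y permutes {..<n}" using A_inv(2)[OF n y] .
    have "y \<circ> (inv y \<circ> h \<circ> y) \<circ> inv y = (y \<circ> inv y) \<circ> h \<circ> (y \<circ> inv y)"
      by (simp add: comp_assoc)
    also have "\<dots> = h" using permutes_inv_o(1)[OF yp] by simp
    finally have "h = y \<circ> (inv y \<circ> h \<circ> y) \<circ> inv y" by simp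
    moreover have "y \<circ> (inv y \<circ> h \<circ> y) \<circ> inv y \<in> semidir n n"
      using A_comp[OF n] A_inv(1)[OF n y] c y by blast
    ultimately show False using False by simp
  qed
  then show ?thesis by simp
qed

lemma sym_reindex:
  fixes F :: "(nat \<Rightarrow> nat) \<Rightarrow> complex"
  assumes y: "y \<in> Sym n"
  shows "(\<Sum>x\<in>Sym n. F (x \<circ> y)) = (\<Sum>x\<in>Sym n. F x)"
proof -
  have yp: "y permutes {..<n}" using y by (simp add: Sym_def)
  have "bij_betw (\<lambda>x. x \<circ> y) (Sym n) (Sym n)"
  proof (rule bij_betwI[where g = "\<lambda>x. x \<circ> inv y"])
    show "(\<lambda>x. x \<circ> y) \<in> Sym n \<rightarrow> Sym n"
      using yp by (auto simp: Sym_def intro: permutes_compose)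
    show "(\<lambda>x. x \<circ> inv y) \<in> Sym n \<rightarrow> Sym n"
      using permutes_inv[OF yp] by (auto simp: Sym_def intro: permutes_compose)
    show "x \<circ> y \<circ> inv y = x" for x
      using permutes_inv_o(1)[OF yp] by (simp add: comp_assoc)
    show "x \<circ> inv y \<circ> y = x" for x
      using permutes_inv_o(2)[OF yp] by (simp add: comp_assoc)
  qed
  then show ?thesis by (rule sum.reindex_bij_betw)
qed

lemma total_zero:
  assumes g: "g \<in> Sym n"
  shows "(\<Sum>x\<in>Sym n. Psi n chi (inv x \<circ> g \<circ> x)) = 0"
proof -
  let ?A = "semidir n n"
  let ?S = "(\<Sum>x\<in>Sym n. Psi n chi (inv x \<circ> g \<circ> x))"
  have perm: "x \<in> Sym n \<Longrightarrow> x permutes {..<n}" for x by (simp add: Sym_def)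
  have "of_nat (card ?A) * ?S = (\<Sum>y\<in>?A. ?S)" by simp
  also have "\<dots> = (\<Sum>y\<in>?A. \<Sum>x\<in>Sym n. Psi n chi (inv (x \<circ> y) \<circ> g \<circ> (x \<circ> y)))"
  proof (rule sum.cong[OF refl])
    fix y assume "y \<in> ?A"
    then have "y \<in> Sym n" using A_inv(2)[OF n] by (simp add: Sym_def)
    then show "?S = (\<Sum>x\<in>Sym n. Psi n chi (inv (x \<circ> y) \<circ> g \<circ> (x \<circ> y)))"
      using sym_reindex[of y "\<lambda>x. Psi n chi (inv x \<circ> g \<circ> x)"] by simp
  qed
  also have "\<dots> = (\<Sum>y\<in>?A. \<Sum>x\<in>Sym n. Psi n chi (inv y \<circ> (inv x \<circ> g \<circ> x) \<circ> y))"
  proof (intro sum.cong refl)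
    fix y x assume y: "y \<in> ?A" and x: "x \<in> Sym n"
    have "inv (x \<circ> y) = inv y \<circ> inv x"
      using o_inv_distrib permutes_bij perm[OF x] A_inv(2)[OF n y] by blast
    then show "Psi n chi (inv (x \<circ> y) \<circ> g \<circ> (x \<circ> y)) = Psi n chi (inv y \<circ> (inv x \<circ> g \<circ> x) \<circ> y)"
      by (simp add: comp_assoc)
  qed
  also have "\<dots> = (\<Sum>x\<in>Sym n. \<Sum>y\<in>?A. Psi n chi (inv y \<circ> (inv x \<circ> g \<circ> x) \<circ> y))"
    by (rule sum.swap)
  also have "\<dots> = 0"
  proof (rule sum.neutral, rule ballI)
    fix x assume x: "x \<in> Sym n"
    have "inv x \<circ> g \<circ> x \<in> Sym n"
      using perm[OF x] perm[OF g] permutes_inv[OF perm[OF x]]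
      by (auto simp: Sym_def intro!: permutes_compose)
    then show "(\<Sum>y\<in>?A. Psi n chi (inv y \<circ> (inv x \<circ> g \<circ> x) \<circ> y)) = 0"
      by (rule inner_zero)
  qed
  finally have "of_nat (card ?A) * ?S = 0" .
  moreover have "card ?A > 0" using card_K[OF n dvd_refl] card_U_pos[OF n] n by simp
  ultimately show ?thesis by simp
qed

lemma final:
  assumes g: "g \<in> Sym n"
  shows "ind n (cyc n) chi g =
           (\<Sum>d | d dvd n. of_int (moebius d) * ind n (semidir n d) (\<lambda>_. 1) g)"
proof -
  let ?h = "\<lambda>x. inv x \<circ> g \<circ> x"
  have "0 = (\<Sum>x\<in>Sym n. Psi n chi (?h x))" using total_zero[OF g] by simp
  also have "\<dots> = (\<Sum>x\<in>Sym n. (1 / of_nat (card (cyc n))) * (if ?h x \<in> cyc n then chi (?h x) else 0))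
     - (\<Sum>x\<in>Sym n. \<Sum>d | d dvd n. of_int (moebius d) *
          ((1 / of_nat (card (semidir n d))) * (if ?h x \<in> semidir n d then 1 else 0)))"
    unfolding Psi_def by (rule sum_subtractf)
  also have "(\<Sum>x\<in>Sym n. (1 / of_nat (card (cyc n))) * (if ?h x \<in> cyc n then chi (?h x) else 0))
      = ind n (cyc n) chi g"
    unfolding ind_def by (simp add: sum_distrib_left)
  also have "(\<Sum>x\<in>Sym n. \<Sum>d | d dvd n. of_int (moebius d) *
          ((1 / of_nat (card (semidir n d))) * (if ?h x \<in> semidir n d then 1 else 0)))
      = (\<Sum>d | d dvd n. of_int (moebius d) * ind n (semidir n d) (\<lambda>_. 1) g)"
    unfolding ind_def by (subst sum.swap) (simp add: sum_distrib_left)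
  finally show ?thesis by simp
qed

end


theorem mainTheorem5:
  fixes n :: nat and chi :: "(nat \<Rightarrow> nat) \<Rightarrow> complex"
  assumes n: "n \<ge> 1"
    and hom: "\<forall>a\<in>cyc n. \<forall>b\<in>cyc n. chi (a \<circ> b) = chi a * chi b"
    and nonzero: "\<forall>a\<in>cyc n. chi a \<noteq> 0"
    and faithful: "inj_on chi (cyc n)"
  shows "\<forall>g\<in>Sym n. ind n (cyc n) chi g =
           (\<Sum>d | d dvd n. of_int (moebius d) * ind n (semidir n d) (\<lambda>_. 1) g)"
  using final[OF n hom nonzero faithful] by blast

end
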